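(* For every positive integer $k$, $$D_{\mathrm{sub}}[EFX_{id}(2,2k+1)] \;\ge\; D[LS(K(2k+1,k))],$$ where $D_{\mathrm{sub}}[EFX_{id}(2,2k+1)]$ denotes the deterministic value-query complexity of finding an EFX allocation for two players who share one identical valuation, with the valuation ranging only over submodular valuations on the goods $[2k+1]$.
   Context: Goods form a finite set $M$. A valuation is a function $v:2^M\to\mathbb{R}_{\ge 0}$ with $v(\emptyset)=0$ that is monotone: $v(S)\le v(T)$ whenever $S\subseteq T$. It is submodular if $v(S\cup\{x\})-v(S)\ge v(T\cup\{x\})-v(T)$ for all $S\subseteq T$ and $x\notin T$. An allocation to players $1,\dots,n$ is an ordered partition $(A_1,\dots,A_n)$ of $M$; parts may be empty. An allocation is EFX (envy-free up to any good) if for all players $i,j$ and every $g\in A_j$ we have $v_i(A_i)\ge v_i(A_j\setminus\{g\})$. The query problem for EFX is as follows. The algorithm knows $n$ and $M=[m]$, and may adaptively ask value queries: querying a set $S$ returns $v(S)$. It must output an EFX allocation. $D[EFX_{id}(n,m)]$ is the minimum, over deterministic algorithms, of the maximum, over valuations $v$ in the class considered, of the number of queries used. The subscript "sub" means the valuation is restricted to submodular valuations. Local Search on a finite undirected graph $G=(V,E)$ is as follows. An unknown function $f:V\to\mathbb{R}$ is accessed only through queries: querying $a\in V$ returns $f(a)$. The algorithm must output a local maximum, i.e. a vertex $a$ with $f(a)\ge f(b)$ for every edge $(a,b)\in E$. $D[LS(G)]$ is the minimum, over deterministic algorithms, of the maximum, over all $f$, of the number of queries used. The Kneser graph $K(n,k)$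 has as vertices the $k$-element subsets of $[n]$, with two vertices adjacent if and only if they are disjoint. *)

theory Defs
  imports Main "HOL-Library.Extended_Nat"
begin

text \<open>A deterministic adaptive algorithm that asks queries of type 'q, receives real
answers, and finally outputs something of type 'o, is a (possibly infinitely
branching) decision tree: either it stops with an output, or it asks a query and
continues depending on the answer.\<close>

datatype ('q, 'o) qtree = Output 'o | Ask 'q "real \<Rightarrow> ('q, 'o) qtree"

primrec qcost :: "('q, 'o) qtree \<Rightarrow> ('q \<Rightarrow> real) \<Rightarrow> nat" where
  "qcost (Output x) f = 0"
| "qcost (Ask q k) f = Suc (qcost (k (f q)) f)"

primrec qout :: "('q, 'o) qtree \<Rightarrow> ('q \<Rightarrow> real) \<Rightarrow> 'o" where
  "qout (Output x) f = x"
| "qout (Ask q k) f = qout (k (f q)) f"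

text \<open>Deterministic query complexity: minimum over algorithms that are correct on every
admissible oracle of the worst-case number of queries over admissible oracles
(infinity if no correct algorithm exists).\<close>

definition query_complexity ::
  "(('q \<Rightarrow> real) \<Rightarrow> bool) \<Rightarrow> (('q \<Rightarrow> real) \<Rightarrow> 'o \<Rightarrow> bool) \<Rightarrow> enat" where
  "query_complexity adm valid =
     (INF T \<in> {T. \<forall>f. adm f \<longrightarrow> valid f (qout T f)}.
        (SUP f \<in> {f. adm f}. enat (qcost T f)))"

definition goods :: "nat \<Rightarrow> nat set" where
  "goods m = {1..m}"

definition monotone_valuation :: "nat set \<Rightarrow> (nat set \<Rightarrow> real) \<Rightarrow> bool" where
  "monotone_valuation M v \<longleftrightarrow>
     v {} = 0 \<and> (\<forall>S. S \<subseteq> M \<longrightarrow> v S \<ge> 0) \<and>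
     (\<forall>S T. S \<subseteq> T \<and> T \<subseteq> M \<longrightarrow> v S \<le> v T)"

definition submodular :: "nat set \<Rightarrow> (nat set \<Rightarrow> real) \<Rightarrow> bool" where
  "submodular M v \<longleftrightarrow>
     (\<forall>S T x. S \<subseteq> T \<and> T \<subseteq> M \<and> x \<in> M \<and> x \<notin> T \<longrightarrow>
        v (S \<union> {x}) - v S \<ge> v (T \<union> {x}) - v T)"

text \<open>A valuation is a function on 2^M; as an oracle of type nat set => real we
normalise it to 0 outside subsets of M (such queries carry no information).\<close>

definition sub_valuation_oracle :: "nat \<Rightarrow> (nat set \<Rightarrow> real) \<Rightarrow> bool" where
  "sub_valuation_oracle m v \<longleftrightarrow>
     monotone_valuation (goods m) v \<and> submodular (goods m) v \<and>
     (\<forall>S. \<not> S \<subseteq> goods m \<longrightarrow> v S = 0)"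

definition is_allocation :: "nat \<Rightarrow> nat set \<Rightarrow> (nat \<Rightarrow> nat set) \<Rightarrow> bool" where
  "is_allocation n M A \<longleftrightarrow>
     (\<Union>i\<in>{1..n}. A i) = M \<and>
     (\<forall>i\<in>{1..n}. \<forall>j\<in>{1..n}. i \<noteq> j \<longrightarrow> A i \<inter> A j = {})"

definition EFX_id :: "nat \<Rightarrow> (nat set \<Rightarrow> real) \<Rightarrow> (nat \<Rightarrow> nat set) \<Rightarrow> bool" where
  "EFX_id n v A \<longleftrightarrow>
     (\<forall>i\<in>{1..n}. \<forall>j\<in>{1..n}. \<forall>g\<in>A j. v (A i) \<ge> v (A j - {g}))"

definition D_sub_EFX_id :: "nat \<Rightarrow> nat \<Rightarrow> enat" where
  "D_sub_EFX_id n m =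
     query_complexity (sub_valuation_oracle m)
       (\<lambda>v A. is_allocation n (goods m) A \<and> EFX_id n v A)"

text \<open>Graph given by vertex set V and symmetric edge relation E. The unknown function
f : V => real is an oracle normalised to 0 outside V.\<close>

definition is_local_max :: "'a set \<Rightarrow> ('a \<Rightarrow> 'a \<Rightarrow> bool) \<Rightarrow> ('a \<Rightarrow> real) \<Rightarrow> 'a \<Rightarrow> bool" where
  "is_local_max V E f a \<longleftrightarrow> a \<in> V \<and> (\<forall>b\<in>V. E a b \<longrightarrow> f a \<ge> f b)"

definition D_LS :: "'a set \<Rightarrow> ('a \<Rightarrow> 'a \<Rightarrow> bool) \<Rightarrow> enat" where
  "D_LS V E =
     query_complexity (\<lambda>f. \<forall>a. a \<notin> V \<longrightarrow> f a = 0) (\<lambda>f a. is_local_max V E f a)"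

definition kneser_vertices :: "nat \<Rightarrow> nat \<Rightarrow> nat set set" where
  "kneser_vertices n k = {S. S \<subseteq> {1..n} \<and> card S = k}"

definition kneser_adj :: "nat set \<Rightarrow> nat set \<Rightarrow> bool" where
  "kneser_adj S T \<longleftrightarrow> S \<inter> T = {}"

end

theory Submission
  imports Defs Complex_Main
begin

definition phi :: "nat \<Rightarrow> nat \<Rightarrow> real" where
  "phi k s = real s * (2 * real (2*k+1) + 1) - real s ^ 2"

definition dl :: "nat \<Rightarrow> (nat set \<Rightarrow> real) \<Rightarrow> nat set \<Rightarrow> real" where
  "dl k f S = (if card S = k then arctan (f S) / 10 else 0)"

definition vf :: "nat \<Rightarrow> (nat set \<Rightarrow> real) \<Rightarrow> nat set \<Rightarrow> real" where
  "vf k f S = (if S \<subseteq> goods (2*k+1) then phi k (card S) + dl k f S else 0)"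

primrec sim :: "nat \<Rightarrow> (nat set, nat \<Rightarrow> nat set) qtree \<Rightarrow> (nat set, nat set) qtree" where
  "sim k (Output A) = Output (if card (A 1) \<le> k then A 1 else A 2)"
| "sim k (Ask S c) = (if S \<subseteq> goods (2*k+1) \<and> card S = k
      then Ask S (\<lambda>r. sim k (c (phi k k + arctan r / 10)))
      else sim k (c (vf k (\<lambda>_. 0) S)))"

lemma dl_bound: "\<bar>dl k f S\<bar> \<le> 1/5"
proof -
  have "\<bar>arctan (f S)\<bar> < 2" using arctan_ubound[of "f S"] arctan_lbound[of "f S"] pi_less_4 by linarith
  then show ?thesis unfolding dl_def by auto
qed

lemma sim_props:
  "qout (sim k T) f = (let A = qout T (vf k f) in if card (A 1) \<le> k then A 1 else A 2)
   \<and> qcost (sim k T) f \<le> qcost T (vf k f)"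
proof (induction T)
  case (Output x)
  then show ?case by simp
next
  case (Ask S c)
  show ?case
  proof (cases "S \<subseteq> goods (2*k+1) \<and> card S = k")
    case True
    then have "vf k f S = phi k k + arctan (f S) / 10" by (simp add: vf_def dl_def)
    then have eq: "sim k (Ask S c) = Ask S (\<lambda>r. sim k (c (phi k k + arctan r / 10)))" by (simp only: sim.simps if_P[OF True])
    show ?thesis using Ask[OF rangeI[of _ "vf k f S"]] unfolding eq by (simp add: \<open>vf k f S = _\<close>)
  next
    case False
    then have "vf k f S = vf k (\<lambda>_. 0) S" by (auto simp add: vf_def dl_def)
    then have eq: "sim k (Ask S c) = sim k (c (vf k f S))" by (simp only: sim.simps if_not_P[OF False] \<open>vf k f S = _\<close>)
    show ?thesis using Ask[OF rangeI[of _ "vf k f S"]] unfolding eq by (simp add: le_SucI)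
  qed
qed

lemma phi_gap:
  assumes "p < q" "q \<le> 2*k+1"
  shows "phi k q - phi k p \<ge> 2"
proof -
  have e: "phi k q - phi k p = (real q - real p) * (2 * real (2*k+1) + 1 - real q - real p)"
    unfolding phi_def by (simp add: algebra_simps power2_eq_square)
  have a: "real q - real p \<ge> 1" using assms by simp
  have b: "2 * real (2*k+1) + 1 - real q - real p \<ge> 2" using assms by simp
  have "(real q - real p) * (2 * real (2*k+1) + 1 - real q - real p) \<ge> 1 * 2"
    by (rule mult_mono) (use a b in auto)
  then show ?thesis using e by simp
qed

lemma finite_goods: "finite (goods m)" by (simp add: goods_def)
lemma card_goods: "card (goods m) = m" by (simp add: goods_def)

lemma vf_strict:
  assumes "P \<subseteq> goods (2*k+1)" "Q \<subseteq> goods (2*k+1)" "card P < card Q"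
  shows "vf k f P + 1 < vf k f Q"
proof -
  have "card Q \<le> 2*k+1" using card_mono[OF finite_goods assms(2)] card_goods by metis
  then have "phi k (card Q) - phi k (card P) \<ge> 2" using phi_gap assms(3) by blast
  then show ?thesis using assms dl_bound[of k f P] dl_bound[of k f Q] by (simp add: vf_def)
qed

lemma vf_sub: assumes k1: "k \<ge> 1" shows "sub_valuation_oracle (2*k+1) (vf k f)"
proof -
  let ?M = "goods (2*k+1)"
  have fin: "\<And>S. S \<subseteq> ?M \<Longrightarrow> finite S" using finite_goods finite_subset by blast
  have mono: "vf k f S \<le> vf k f T" if "S \<subseteq> T" "T \<subseteq> ?M" for S T
  proof (cases "S = T")
    case False
    then have "card S < card T" using psubset_card_mono[OF fin[OF that(2)]] that by blast
    moreover have "S \<subseteq> ?M" using that by blast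
    ultimately have "vf k f S + 1 < vf k f T" using vf_strict[of S k T f] that by blast
    then show ?thesis by linarith
  qed simp
  have nn: "vf k f S \<ge> 0" if "S \<subseteq> ?M" for S
  proof (cases "card S = 0")
    case True
    then show ?thesis using k1 that by (auto simp: vf_def dl_def phi_def)
  next
    case False
    then have "vf k f {} + 1 < vf k f S" using vf_strict[of "{}" k S f] that by auto
    moreover have "vf k f {} \<ge> 0" using k1 by (auto simp: vf_def phi_def dl_def)
    ultimately show ?thesis by linarith
  qed
  have sm: "vf k f (S \<union> {x}) - vf k f S \<ge> vf k f (T \<union> {x}) - vf k f T"
    if "S \<subseteq> T" "T \<subseteq> ?M" "x \<in> ?M" "x \<notin> T" for S T x
  proof (cases "S = T")
    case False
    have fT: "finite T" using fin that(2) by blast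
    have fS: "finite S" using fT that(1) finite_subset by blast
    have lt: "card S < card T" using psubset_card_mono[OF fT] that False by blast
    have cT: "card T < 2*k+1"
    proof -
      have "T \<subset> ?M" using that by blast
      then show ?thesis using psubset_card_mono[OF finite_goods] card_goods by metis
    qed
    have "x \<notin> S" using that by blast
    then have cS1: "card (S \<union> {x}) = Suc (card S)" using fS by simp
    have cT1: "card (T \<union> {x}) = Suc (card T)" using fT that by auto
    have d: "\<And>s. phi k (Suc s) - phi k s = 2 * real (2*k+1) - 2 * real s"
      unfolding phi_def by (simp add: algebra_simps power2_eq_square)
    have "S \<union> {x} \<subseteq> ?M" "T \<union> {x} \<subseteq> ?M" "S \<subseteq> ?M" using that by auto
    then have "vf k f (S \<union> {x}) - vf k f S = 2 * real (2*k+1) - 2 * real (card S) + dl k f (S \<union> {x}) - dl k f S"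
      "vf k f (T \<union> {x}) - vf k f T = 2 * real (2*k+1) - 2 * real (card T) + dl k f (T \<union> {x}) - dl k f T"
      using that cS1 cT1 d[of "card S"] d[of "card T"] by (auto simp: vf_def)
    moreover have "real (card S) + 1 \<le> real (card T)" using lt by simp
    ultimately show ?thesis
      using dl_bound[of k f "S \<union> {x}"] dl_bound[of k f S] dl_bound[of k f "T \<union> {x}"] dl_bound[of k f T]
      by linarith
  qed simp
  have e: "vf k f {} = 0" using k1 by (simp add: vf_def phi_def dl_def)
  show ?thesis
    unfolding sub_valuation_oracle_def monotone_valuation_def submodular_def
    using mono nn sm e by (auto simp: vf_def)
qed

lemma local_max_side:
  assumes k1: "k \<ge> 1" and un: "P \<union> Q = goods (2*k+1)" and dj: "P \<inter> Q = {}"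
    and cP: "card P \<le> k"
    and ef: "\<And>g. g \<in> Q \<Longrightarrow> vf k f P \<ge> vf k f (Q - {g})"
  shows "is_local_max (kneser_vertices (2*k+1) k) kneser_adj f P"
proof -
  let ?M = "goods (2*k+1)"
  have PM: "P \<subseteq> ?M" "Q \<subseteq> ?M" using un by auto
  have fP: "finite P" "finite Q" using PM finite_goods finite_subset by blast+
  have "card (P \<union> Q) = card P + card Q" by (rule card_Un_disjoint[OF fP dj])
  then have cs: "card P + card Q = 2*k+1" using un card_goods by simp
  have ck: "card P = k"
  proof (rule ccontr)
    assume "card P \<noteq> k"
    then have "card P < k" using cP by simp
    then have "card Q \<ge> k + 2" using cs by simp
    then have "Q \<noteq> {}" by auto
    then obtain g where g: "g \<in> Q" by blast
    have "card (Q - {g}) = card Q - 1" using g fP by simp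
    then have "card P < card (Q - {g})" using \<open>card P < k\<close> \<open>card Q \<ge> k+2\<close> by simp
    moreover have "Q - {g} \<subseteq> ?M" using PM by blast
    ultimately have "vf k f P + 1 < vf k f (Q - {g})" using vf_strict[OF PM(1)] by blast
    then show False using ef[OF g] by linarith
  qed
  have cQ: "card Q = k + 1" using cs ck by simp
  show ?thesis unfolding is_local_max_def kneser_vertices_def kneser_adj_def
  proof (intro conjI ballI impI)
    show "P \<in> {S. S \<subseteq> {1..2 * k + 1} \<and> card S = k}" using PM ck by (simp add: goods_def)
    fix b assume b: "b \<in> {S. S \<subseteq> {1..2 * k + 1} \<and> card S = k}" and dpb: "P \<inter> b = {}"
    have "b \<subseteq> ?M" using b by (simp add: goods_def)
    then have bQ: "b \<subseteq> Q" using dpb un by blast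
    have "b \<noteq> Q" using b cQ by auto
    then obtain g where g: "g \<in> Q" "g \<notin> b" using bQ by blast
    have "b \<subseteq> Q - {g}" using bQ g by blast
    moreover have "card (Q - {g}) = k" using g fP cQ by simp
    moreover have "finite (Q - {g})" using fP by simp
    moreover have "card b = k" using b by simp
    ultimately have beq: "b = Q - {g}" using card_subset_eq[of "Q - {g}" b] by simp
    have "vf k f P \<ge> vf k f b" using ef[OF g(1)] beq by simp
    moreover have "vf k f P = phi k k + arctan (f P) / 10" using PM ck by (simp add: vf_def dl_def)
    moreover have "vf k f b = phi k k + arctan (f b) / 10" using \<open>b \<subseteq> ?M\<close> \<open>card b = k\<close> by (simp add: vf_def dl_def)
    ultimately have "arctan (f P) / 10 \<ge> arctan (f b) / 10" by linarith
    then show "f b \<le> f P" by (simp add: arctan_le_iff)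
  qed
qed

theorem theorem3p1:
  fixes k :: nat
  assumes "k \<ge> 1"
  shows "D_sub_EFX_id 2 (2 * k + 1) \<ge> D_LS (kneser_vertices (2 * k + 1) k) kneser_adj"
  unfolding D_sub_EFX_id_def D_LS_def query_complexity_def
proof (rule INF_greatest)
  fix T assume T: "T \<in> {T. \<forall>f. sub_valuation_oracle (2*k+1) f \<longrightarrow>
      is_allocation 2 (goods (2*k+1)) (qout T f) \<and> EFX_id 2 f (qout T f)}"
  let ?V = "kneser_vertices (2*k+1) k"
  have corr: "sim k T \<in> {T. \<forall>f. (\<forall>a. a \<notin> ?V \<longrightarrow> f a = 0) \<longrightarrow> is_local_max ?V kneser_adj f (qout T f)}"
  proof (intro CollectI allI impI)
    fix f :: "nat set \<Rightarrow> real"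
    let ?A = "qout T (vf k f)"
    have al: "is_allocation 2 (goods (2*k+1)) ?A" and ex: "EFX_id 2 (vf k f) ?A"
      using T vf_sub[OF assms] by auto
    have I: "{1..2::nat} = {1,2}" by auto
    have un: "?A 1 \<union> ?A 2 = goods (2*k+1)" and dj0: "\<forall>i\<in>{1,2}. \<forall>j\<in>{1,2}. i \<noteq> j \<longrightarrow> ?A i \<inter> ?A j = {}"
      using al unfolding is_allocation_def I by simp_all
    have dj: "?A 1 \<inter> ?A 2 = {}" using dj0 by simp
    have ex0: "\<forall>i\<in>{1,2}. \<forall>j\<in>{1,2}. \<forall>g\<in>?A j. vf k f (?A j - {g}) \<le> vf k f (?A i)"
      using ex unfolding EFX_id_def I .
    have e12: "\<And>g. g \<in> ?A 2 \<Longrightarrow> vf k f (?A 1) \<ge> vf k f (?A 2 - {g})"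
     and e21: "\<And>g. g \<in> ?A 1 \<Longrightarrow> vf k f (?A 2) \<ge> vf k f (?A 1 - {g})"
      using ex0 by simp_all
    show "is_local_max ?V kneser_adj f (qout (sim k T) f)"
    proof (cases "card (?A 1) \<le> k")
      case True
      then show ?thesis using sim_props[of k T f] local_max_side[OF assms un dj True e12] by (simp add: Let_def)
    next
      case False
      have fin: "finite (?A 1)" "finite (?A 2)" using finite_goods[of "2*k+1"] unfolding un[symmetric] by simp_all
      have "card (?A 1 \<union> ?A 2) = card (?A 1) + card (?A 2)" by (rule card_Un_disjoint[OF fin dj])
      then have "card (?A 1) + card (?A 2) = 2*k+1" using un card_goods by simp
      then have c2: "card (?A 2) \<le> k" using False by simp
      have un': "?A 2 \<union> ?A 1 = goods (2*k+1)" and dj': "?A 2 \<inter> ?A 1 = {}" using un dj by auto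
      show ?thesis using False sim_props[of k T f] local_max_side[OF assms un' dj' c2 e21] by (simp add: Let_def)
    qed
  qed
  have "(SUP f \<in> {f. \<forall>a. a \<notin> ?V \<longrightarrow> f a = 0}. enat (qcost (sim k T) f))
        \<le> (SUP v \<in> {v. sub_valuation_oracle (2*k+1) v}. enat (qcost T v))"
  proof (rule SUP_least)
    fix f :: "nat set \<Rightarrow> real"
    have "enat (qcost (sim k T) f) \<le> enat (qcost T (vf k f))" using sim_props[of k T f] by simp
    also have "\<dots> \<le> (SUP v \<in> {v. sub_valuation_oracle (2*k+1) v}. enat (qcost T v))"
      by (rule SUP_upper) (use vf_sub[OF assms] in auto)
    finally show "enat (qcost (sim k T) f) \<le> (SUP v \<in> {v. sub_valuation_oracle (2*k+1) v}. enat (qcost T v))" .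
  qed
  then show "(INF T \<in> {T. \<forall>f. (\<forall>a. a \<notin> ?V \<longrightarrow> f a = 0) \<longrightarrow> is_local_max ?V kneser_adj f (qout T f)}.
        SUP f \<in> {f. \<forall>a. a \<notin> ?V \<longrightarrow> f a = 0}. enat (qcost T f))
       \<le> (SUP v \<in> {v. sub_valuation_oracle (2*k+1) v}. enat (qcost T v))"
    by (rule order_trans[OF INF_lower[OF corr]])
qed

end
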